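(* Let $\Sigma=(X,U,F)$ be a system, $Q\subset X$ a controlled invariant set, and $(\mathcal{A},G)$ a quasi-invariant-partition of $Q$. Then \[h_{inv}(\mathcal{A},G)=\overline{w}^*(\mathcal{A},G),\] where $\overline{w}^*(\mathcal{A},G)$ is the maximum mean weight.
   Context: A system is a triple $\Sigma=(X,U,F)$ where $X,U$ are nonempty sets and $F:X\times U\rightrightarrows X$ is a set-valued map with $F(x,u)\neq\emptyset$ for all $(x,u)$; for $A\subset X$, $F(A,u)=\bigcup_{x\in A}F(x,u)$. $Q\subset X$ is controlled invariant if for every $x\in Q$ there is $u\in U$ with $F(x,u)\subset Q$. An invariant cover of $Q$ is a pair $(\mathcal{A},G)$ where $\mathcal{A}$ is a finite cover of $Q$ (by subsets of $Q$) and $G:\mathcal{A}\to U$ satisfies $F(A,G(A))\subset Q$ for all $A\in\mathcal{A}$. For $\mathcal{S}\subset\mathcal{A}^n$, $\alpha=\alpha(0)\cdots\alpha(n-1)\in\mathcal{S}$ and integer $0\le t<n-1$, let $P(\alpha|_{[0,t]})=\{A\in\mathcal{A}:\exists\hat\alpha\in\mathcal{S},\ \hat\alpha|_{[0,t]}=\alpha|_{[0,t]},\ A=\hat\alpha(t+1)\}$, and $P(\alpha|_{[0,n-1]})=P(\alpha)=\{\hat\alpha(0):\hat\alpha\in\mathcal{S}\}$. $\mathcal{S}$ is $(n,Q)$-spanning in $(\mathcal{A},G)$ if (1) the elements of $P(\alpha)$ cover $Q$, and (2) for every $\alpha\in\mathcal{S}$ and $0\le t<n-1$, $F(\alpha(t),G(\alpha(t)))\subset\bigcup_{A'\in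 P(\alpha|_{[0,t]})}A'$. Let $N(\mathcal{S})=\max_{\alpha\in\mathcal{S}}\prod_{t=0}^{n-1}\sharp P(\alpha|_{[0,t]})$, $r_{inv}(n,Q,\mathcal{A},G)=\min\{N(\mathcal{S}):\mathcal{S}\ (n,Q)\text{-spanning in }(\mathcal{A},G)\}$, and $h_{inv}(\mathcal{A},G)=\lim_{n\to\infty}\frac1n\log r_{inv}(n,Q,\mathcal{A},G)$ ($\log$ base $2$). For $A\in\mathcal{A}$: $D(A)=\{A'\in\mathcal{A}:F(A,G(A))\cap A'\neq\emptyset\}$ and $w(A)=\log\sharp D(A)$. A sequence $(A_i)$ in $\mathcal{A}$ is admissible if $F(A_i,G(A_i))\cap A_{i+1}\neq\emptyset$ for all consecutive indices. A finite sequence $c=(A_i)_{i=0}^{k-1}$ is an irreducible sequence of period $k$ if the infinite sequence $ccc\cdots$ is admissible and $A_i\neq A_j$ for $i\neq j$; its mean weight is $\overline{w}(c)=\frac1k\sum_{i=0}^{k-1}w(A_i)$, and $\overline{w}^*(\mathcal{A},G)=\max_c\overline{w}(c)$ over all irreducible periodic sequences $c$. An invariant cover $(\mathcal{A},G)$ is a quasi-invariant-partition of $Q$ if $A\setminus\bigcup_{B\in\mathcal{A},B\neq A}B\neq\emptyset$ for all $A\in\mathcal{A}$, and $F(A,G(A))\cap\big(B\setminus\bigcup_{C\in D(A),C\neq B}C\big)\neq\emptyset$ for all $A\in\mathcal{A}$ and $B\in D(A)$. *)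

theory Defs
  imports Complex_Main
begin

definition Fset :: "('x \<Rightarrow> 'u \<Rightarrow> 'x set) \<Rightarrow> 'x set \<Rightarrow> 'u \<Rightarrow> 'x set" where
  "Fset F A u = (\<Union>x\<in>A. F x u)"

definition is_system :: "('x \<Rightarrow> 'u \<Rightarrow> 'x set) \<Rightarrow> bool" where
  "is_system F \<longleftrightarrow> (\<forall>x u. F x u \<noteq> {})"

definition controlled_invariant :: "('x \<Rightarrow> 'u \<Rightarrow> 'x set) \<Rightarrow> 'x set \<Rightarrow> bool" where
  "controlled_invariant F Q \<longleftrightarrow> (\<forall>x\<in>Q. \<exists>u. F x u \<subseteq> Q)"

definition invariant_cover ::
  "('x \<Rightarrow> 'u \<Rightarrow> 'x set) \<Rightarrow> 'x set \<Rightarrow> 'x set set \<Rightarrow> ('x set \<Rightarrow> 'u) \<Rightarrow> bool" where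
  "invariant_cover F Q \<A> G \<longleftrightarrow>
     finite \<A> \<and> (\<forall>A\<in>\<A>. A \<subseteq> Q) \<and> Q \<subseteq> \<Union>\<A> \<and>
     (\<forall>A\<in>\<A>. Fset F A (G A) \<subseteq> Q)"

definition Dset :: "('x \<Rightarrow> 'u \<Rightarrow> 'x set) \<Rightarrow> 'x set set \<Rightarrow> ('x set \<Rightarrow> 'u) \<Rightarrow> 'x set \<Rightarrow> 'x set set" where
  "Dset F \<A> G A = {A'\<in>\<A>. Fset F A (G A) \<inter> A' \<noteq> {}}"

definition weight :: "('x \<Rightarrow> 'u \<Rightarrow> 'x set) \<Rightarrow> 'x set set \<Rightarrow> ('x set \<Rightarrow> 'u) \<Rightarrow> 'x set \<Rightarrow> real" where
  "weight F \<A> G A = log 2 (real (card (Dset F \<A> G A)))"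

definition quasi_invariant_partition ::
  "('x \<Rightarrow> 'u \<Rightarrow> 'x set) \<Rightarrow> 'x set \<Rightarrow> 'x set set \<Rightarrow> ('x set \<Rightarrow> 'u) \<Rightarrow> bool" where
  "quasi_invariant_partition F Q \<A> G \<longleftrightarrow>
     invariant_cover F Q \<A> G \<and>
     (\<forall>A\<in>\<A>. A - \<Union>{B\<in>\<A>. B \<noteq> A} \<noteq> {}) \<and>
     (\<forall>A\<in>\<A>. \<forall>B\<in>Dset F \<A> G A.
        Fset F A (G A) \<inter> (B - \<Union>{C\<in>Dset F \<A> G A. C \<noteq> B}) \<noteq> {})"

text \<open>Sequences in \<A>^n are lists of length n. For a set S of such sequences and a
  prefix p = alpha|[0,t] (length t+1), Pset S n p is P(alpha|[0,t]); for the full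
  word (length n) it is the set of initial elements of members of S.\<close>

definition Pset :: "'x set list set \<Rightarrow> nat \<Rightarrow> 'x set list \<Rightarrow> 'x set set" where
  "Pset S n p =
     (if length p = n then {hd \<beta> | \<beta>. \<beta> \<in> S}
      else {\<beta> ! length p | \<beta>. \<beta> \<in> S \<and> take (length p) \<beta> = p})"

definition spanning ::
  "('x \<Rightarrow> 'u \<Rightarrow> 'x set) \<Rightarrow> 'x set \<Rightarrow> 'x set set \<Rightarrow> ('x set \<Rightarrow> 'u) \<Rightarrow> nat \<Rightarrow> 'x set list set \<Rightarrow> bool" where
  "spanning F Q \<A> G n S \<longleftrightarrow>
     S \<subseteq> {\<alpha>. length \<alpha> = n \<and> set \<alpha> \<subseteq> \<A>} \<and>
     Q \<subseteq> \<Union>(Pset S n (replicate n undefined)) \<and>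
     (\<forall>\<alpha>\<in>S. \<forall>t. t + 1 < n \<longrightarrow>
        Fset F (\<alpha> ! t) (G (\<alpha> ! t)) \<subseteq> \<Union>(Pset S n (take (t + 1) \<alpha>)))"

definition Nval :: "'x set list set \<Rightarrow> nat \<Rightarrow> nat" where
  "Nval S n = Max {(\<Prod>t<n. card (Pset S n (take (t + 1) \<alpha>))) | \<alpha>. \<alpha> \<in> S}"

definition r_inv ::
  "('x \<Rightarrow> 'u \<Rightarrow> 'x set) \<Rightarrow> 'x set \<Rightarrow> 'x set set \<Rightarrow> ('x set \<Rightarrow> 'u) \<Rightarrow> nat \<Rightarrow> nat" where
  "r_inv F Q \<A> G n = Min {Nval S n | S. spanning F Q \<A> G n S}"

definition irreducible_periodic ::
  "('x \<Rightarrow> 'u \<Rightarrow> 'x set) \<Rightarrow> 'x set set \<Rightarrow> ('x set \<Rightarrow> 'u) \<Rightarrow> 'x set list \<Rightarrow> bool" where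
  "irreducible_periodic F \<A> G c \<longleftrightarrow>
     c \<noteq> [] \<and> set c \<subseteq> \<A> \<and> distinct c \<and>
     (\<forall>i<length c. Fset F (c ! i) (G (c ! i)) \<inter> c ! ((i + 1) mod length c) \<noteq> {})"

definition mean_weight ::
  "('x \<Rightarrow> 'u \<Rightarrow> 'x set) \<Rightarrow> 'x set set \<Rightarrow> ('x set \<Rightarrow> 'u) \<Rightarrow> 'x set list \<Rightarrow> real" where
  "mean_weight F \<A> G c = (\<Sum>i<length c. weight F \<A> G (c ! i)) / real (length c)"

definition max_mean_weight ::
  "('x \<Rightarrow> 'u \<Rightarrow> 'x set) \<Rightarrow> 'x set set \<Rightarrow> ('x set \<Rightarrow> 'u) \<Rightarrow> real" where
  "max_mean_weight F \<A> G = Max {mean_weight F \<A> G c | c. irreducible_periodic F \<A> G c}"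

end

theory Submission
  imports Defs
begin

fun adm :: "'a set \<Rightarrow> ('a \<Rightarrow> 'a set) \<Rightarrow> 'a list \<Rightarrow> bool" where
  "adm A D [] = True"
| "adm A D [a] = (a \<in> A)"
| "adm A D (a # b # r) = (a \<in> A \<and> b \<in> D a \<and> adm A D (b # r))"

lemma adm_Cons: "adm A D (a # xs) \<longleftrightarrow> a \<in> A \<and> adm A D xs \<and> (xs \<noteq> [] \<longrightarrow> hd xs \<in> D a)"
  by (cases xs) auto

lemma adm_append: "adm A D (xs @ ys) \<longleftrightarrow> adm A D xs \<and> adm A D ys \<and> (xs \<noteq> [] \<longrightarrow> ys \<noteq> [] \<longrightarrow> hd ys \<in> D (last xs))"
  by (induction xs) (auto simp: adm_Cons)

lemma adm_nth: "adm A D xs \<longleftrightarrow> set xs \<subseteq> A \<and> (\<forall>i. Suc i < length xs \<longrightarrow> xs ! Suc i \<in> D (xs ! i))"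
proof (induction xs)
  case Nil then show ?case by simp
next
  case (Cons a xs)
  have "(\<forall>i. Suc i < length (a # xs) \<longrightarrow> (a # xs) ! Suc i \<in> D ((a # xs) ! i)) \<longleftrightarrow>
        (xs \<noteq> [] \<longrightarrow> hd xs \<in> D a) \<and> (\<forall>i. Suc i < length xs \<longrightarrow> xs ! Suc i \<in> D (xs ! i))"
    (is "?L \<longleftrightarrow> ?R")
  proof
    assume L: ?L
    show ?R
    proof
      show "xs \<noteq> [] \<longrightarrow> hd xs \<in> D a" using L[rule_format, of 0] by (cases xs) auto
      show "\<forall>i. Suc i < length xs \<longrightarrow> xs ! Suc i \<in> D (xs ! i)"
        using L by (metis Suc_less_eq length_Cons nth_Cons_Suc)
    qed
  next
    assume R: ?R
    show ?L
    proof (intro allI impI)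
      fix i assume i: "Suc i < length (a # xs)"
      show "(a # xs) ! Suc i \<in> D ((a # xs) ! i)"
      proof (cases i)
        case 0 then show ?thesis using R i by (cases xs) auto
      next
        case (Suc j) then show ?thesis using R i by auto
      qed
    qed
  qed
  then show ?case using Cons by (auto simp: adm_Cons)
qed

definition cw :: "'a set \<Rightarrow> ('a \<Rightarrow> 'a set) \<Rightarrow> 'a list \<Rightarrow> bool" where
  "cw A D c \<longleftrightarrow> c \<noteq> [] \<and> adm A D (c @ [hd c])"

lemma cw_split:
  assumes "cw A D (xs @ [y] @ ys @ [y] @ zs)"
  shows "cw A D (y # ys)" "cw A D (xs @ y # zs)"
  using assms by (auto simp: cw_def adm_append adm_Cons hd_append split: if_splits)

lemma path_split:
  assumes "adm A D (xs @ [y] @ ys @ [y] @ zs)"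
  shows "cw A D (y # ys)" "adm A D (xs @ y # zs)"
  using assms by (auto simp: cw_def adm_append adm_Cons hd_append split: if_splits)

lemma cw_set: "cw A D c \<Longrightarrow> set c \<subseteq> A"
  by (auto simp: cw_def adm_nth)

definition Mw :: "'a set \<Rightarrow> ('a \<Rightarrow> 'a set) \<Rightarrow> ('a \<Rightarrow> real) \<Rightarrow> real" where
  "Mw A D wt = Max {sum_list (map wt c) / real (length c) | c. cw A D c \<and> distinct c}"

lemma fin_cyc:
  assumes "finite A"
  shows "finite {sum_list (map wt c) / real (length c) | c. cw A D c \<and> distinct c}"
proof -
  have "{c. cw A D c \<and> distinct c} \<subseteq> {xs. set xs \<subseteq> A \<and> length xs \<le> card A}"
  proof
    fix c assume "c \<in> {c. cw A D c \<and> distinct c}"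
    then have "cw A D c" "distinct c" by auto
    then have "set c \<subseteq> A" "length c = card (set c)" using cw_set distinct_card by metis+
    then show "c \<in> {xs. set xs \<subseteq> A \<and> length xs \<le> card A}" using card_mono[OF assms] by auto
  qed
  then have "finite {c. cw A D c \<and> distinct c}"
    using finite_lists_length_le[OF assms] finite_subset by blast
  then have "finite ((\<lambda>c. sum_list (map wt c) / real (length c)) ` {c. cw A D c \<and> distinct c})" by simp
  moreover have "{sum_list (map wt c) / real (length c) | c. cw A D c \<and> distinct c}
     = (\<lambda>c. sum_list (map wt c) / real (length c)) ` {c. cw A D c \<and> distinct c}" by auto
  ultimately show ?thesis by simp
qed

lemma cw_bound:
  assumes "finite A" "cw A D c"
  shows "sum_list (map wt c) \<le> real (length c) * Mw A D wt"
  using assms(2)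
proof (induction "length c" arbitrary: c rule: less_induct)
  case less
  show ?case
  proof (cases "distinct c")
    case True
    have "sum_list (map wt c) / real (length c) \<le> Mw A D wt"
      unfolding Mw_def using True less.prems by (intro Max_ge[OF fin_cyc[OF assms(1)]]) auto
    moreover have "length c > 0" using less.prems by (auto simp: cw_def)
    ultimately show ?thesis by (simp add: divide_le_eq mult.commute)
  next
    case False
    then obtain xs ys zs y where c: "c = xs @ [y] @ ys @ [y] @ zs" using not_distinct_decomp by blast
    from less.prems have cc: "cw A D (xs @ [y] @ ys @ [y] @ zs)" by (simp only: c)
    have 1: "cw A D (y # ys)" "cw A D (xs @ y # zs)" using cw_split[OF cc] by blast+
    have "sum_list (map wt (y # ys)) \<le> real (length (y # ys)) * Mw A D wt"
      by (rule less.hyps[OF _ 1(1)]) (simp add: c)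
    moreover have "sum_list (map wt (xs @ y # zs)) \<le> real (length (xs @ y # zs)) * Mw A D wt"
      by (rule less.hyps[OF _ 1(2)]) (simp add: c)
    ultimately show ?thesis by (simp add: c algebra_simps)
  qed
qed

lemma cw_distinct_ex:
  assumes "cw A D c"
  shows "\<exists>d. cw A D d \<and> distinct d"
  using assms
proof (induction "length c" arbitrary: c rule: less_induct)
  case less
  show ?case
  proof (cases "distinct c")
    case True then show ?thesis using less.prems by blast
  next
    case False
    then obtain xs ys zs y where c: "c = xs @ [y] @ ys @ [y] @ zs" using not_distinct_decomp by blast
    from less.prems have cc: "cw A D (xs @ [y] @ ys @ [y] @ zs)" by (simp only: c)
    have 1: "cw A D (y # ys)" using cw_split[OF cc] by blast
    show ?thesis by (rule less.hyps[OF _ 1]) (simp add: c)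
  qed
qed

lemma path_bound:
  assumes "finite A" "adm A D al" "\<And>a. a \<in> A \<Longrightarrow> wt a \<le> W" "0 \<le> W" "0 \<le> Mw A D wt"
  shows "sum_list (map wt al) \<le> real (length al) * Mw A D wt + real (card A) * W"
  using assms(2)
proof (induction "length al" arbitrary: al rule: less_induct)
  case less
  show ?case
  proof (cases "distinct al")
    case True
    have sA: "set al \<subseteq> A" using less.prems by (simp add: adm_nth)
    have "length al \<le> card A" using True sA distinct_card card_mono[OF assms(1)] by metis
    have "sum_list (map wt al) \<le> sum_list (map (\<lambda>_. W) al)"
      using sA assms(3) by (intro sum_list_mono) auto
    also have "\<dots> = real (length al) * W" by (simp add: sum_list_triv)
    also have "\<dots> \<le> real (card A) * W"
      using \<open>length al \<le> card A\<close> assms(4) by (intro mult_right_mono) auto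
    finally show ?thesis using assms(5) by (smt (verit) of_nat_0_le_iff mult_nonneg_nonneg)
  next
    case False
    then obtain xs ys zs y where c: "al = xs @ [y] @ ys @ [y] @ zs" using not_distinct_decomp by blast
    from less.prems have cc: "adm A D (xs @ [y] @ ys @ [y] @ zs)" by (simp only: c)
    have 1: "cw A D (y # ys)" "adm A D (xs @ y # zs)" using path_split[OF cc] by blast+
    have "sum_list (map wt (y # ys)) \<le> real (length (y # ys)) * Mw A D wt"
      by (rule cw_bound[OF assms(1) 1(1)])
    moreover have "sum_list (map wt (xs @ y # zs)) \<le> real (length (xs @ y # zs)) * Mw A D wt + real (card A) * W"
      by (rule less.hyps[OF _ 1(2)]) (simp add: c)
    ultimately show ?thesis by (simp add: c algebra_simps)
  qed
qed

lemma adm_ext: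
  assumes "\<And>a. a \<in> A \<Longrightarrow> \<exists>b\<in>A. b \<in> D a" "adm A D p" "p \<noteq> []"
  shows "\<exists>q. length q = k \<and> adm A D (p @ q)"
proof (induction k)
  case 0 then show ?case using assms by auto
next
  case (Suc k)
  then obtain q where q: "length q = k" "adm A D (p @ q)" by blast
  have "set (p @ q) \<subseteq> A" using q(2) by (simp only: adm_nth)
  then have "last (p @ q) \<in> A" using assms(3) last_in_set[of "p @ q"] by auto
  then obtain b where b: "b \<in> A" "b \<in> D (last (p @ q))" using assms(1) by blast
  have "adm A D ((p @ q) @ [b])" using q b assms(3) by (subst adm_append) simp
  then show ?case using q by (intro exI[of _ "q @ [b]"]) simp
qed

lemma cw_ex:
  assumes "finite A" "A \<noteq> {}" "\<And>a. a \<in> A \<Longrightarrow> \<exists>b\<in>A. b \<in> D a"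
  shows "\<exists>c. cw A D c"
proof -
  obtain a where a: "a \<in> A" using assms(2) by blast
  obtain q where q: "length q = card A" "adm A D ([a] @ q)"
  proof -
    have "\<exists>q. length q = card A \<and> adm A D ([a] @ q)"
      by (rule adm_ext) (use assms(3) a in auto)
    then show ?thesis using that by blast
  qed
  have "set ([a] @ q) \<subseteq> A" using q(2) by (simp add: adm_nth)
  then have "card (set ([a] @ q)) \<le> card A" using card_mono[OF assms(1)] by blast
  then have "\<not> distinct ([a] @ q)" using q(1) distinct_card by fastforce
  then obtain xs ys zs y where c: "[a] @ q = xs @ [y] @ ys @ [y] @ zs" using not_distinct_decomp by blast
  show ?thesis using path_split(1) q(2) c by metis
qed

lemma Mw_nonneg:
  assumes "finite A" "A \<noteq> {}" "\<And>a. a \<in> A \<Longrightarrow> \<exists>b\<in>A. b \<in> D a" "\<And>a. a \<in> A \<Longrightarrow> 0 \<le> wt a"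
  shows "0 \<le> Mw A D wt"
proof -
  obtain c where c: "cw A D c" using cw_ex[of A D] assms(1-3) by blast
  have "0 \<le> sum_list (map wt c)" using cw_set[OF c] assms(4) by (intro sum_list_nonneg) auto
  also have "\<dots> \<le> real (length c) * Mw A D wt" by (rule cw_bound[OF assms(1) c])
  finally show ?thesis using c by (auto simp: cw_def zero_le_mult_iff)
qed


lemma cw_step:
  assumes "cw A D c"
  shows "c ! (Suc t mod length c) \<in> D (c ! (t mod length c))"
proof -
  define k where "k = length c"
  have k: "k > 0" using assms by (auto simp: cw_def k_def)
  define i where "i = t mod k"
  have ik: "i < k" using k by (simp add: i_def)
  have ad: "adm A D (c @ [hd c])" using assms by (simp add: cw_def)
  then have "(c @ [hd c]) ! Suc i \<in> D ((c @ [hd c]) ! i)"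
    using ik unfolding adm_nth k_def by auto
  moreover have "(c @ [hd c]) ! i = c ! i" using ik by (simp add: nth_append k_def)
  moreover have "(c @ [hd c]) ! Suc i = c ! (Suc t mod k)"
  proof (cases "Suc i = k")
    case True
    then have "Suc t mod k = 0" by (simp add: mod_Suc i_def)
    moreover have "hd c = c ! 0" using k by (simp add: hd_conv_nth k_def)
    ultimately show ?thesis using True by (simp add: nth_append k_def)
  next
    case False
    then have "Suc t mod k = Suc i" by (simp add: mod_Suc i_def)
    then show ?thesis using False ik by (simp add: nth_append k_def)
  qed
  ultimately show ?thesis by (simp add: i_def k_def)
qed

lemma periodic_adm:
  assumes "cw A D c"
  shows "adm A D (map (\<lambda>t. c ! (t mod length c)) [0..<n])"
proof -
  have k: "length c > 0" using assms by (auto simp: cw_def)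
  have "set (map (\<lambda>t. c ! (t mod length c)) [0..<n]) \<subseteq> A"
    using cw_set[OF assms] k by auto
  moreover have "\<forall>i. Suc i < n \<longrightarrow> c ! (Suc i mod length c) \<in> D (c ! (i mod length c))"
    using cw_step[OF assms] by blast
  ultimately show ?thesis unfolding adm_nth by simp
qed

lemma sum_mod_period:
  fixes f :: "nat \<Rightarrow> real"
  shows "(\<Sum>t<q*k. f (t mod k)) = real q * (\<Sum>t<k. f t)"
proof (induction q)
  case 0 then show ?case by simp
next
  case (Suc q)
  have "(\<Sum>t<Suc q*k. f (t mod k)) = (\<Sum>t\<in>{0..<q*k}. f (t mod k)) + (\<Sum>t\<in>{q*k..<q*k+k}. f (t mod k))"
    by (simp add: atLeast0LessThan[symmetric] sum.atLeastLessThan_concat add.commute)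
  also have "(\<Sum>t\<in>{q*k..<q*k+k}. f (t mod k)) = (\<Sum>t\<in>{0+q*k..<k+q*k}. f (t mod k))"
    by (simp add: add.commute)
  also have "\<dots> = (\<Sum>t\<in>{0..<k}. f ((t + q*k) mod k))"
    by (rule sum.shift_bounds_nat_ivl)
  also have "\<dots> = (\<Sum>t<k. f t)"
    by (simp add: atLeast0LessThan)
  finally show ?case using Suc by (simp add: atLeast0LessThan algebra_simps)
qed

lemma periodic_lower:
  assumes "cw A D c" "sum_list (map wt c) = real (length c) * M" "0 \<le> M"
    "\<And>a. a \<in> A \<Longrightarrow> 0 \<le> wt a"
  shows "real n * M - real (length c) * M \<le> (\<Sum>t<n. wt (c ! (t mod length c)))"
proof -
  define k where "k = length c"
  have k: "k > 0" using assms by (auto simp: cw_def k_def)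
  have nn: "0 \<le> wt (c ! (t mod k))" for t
  proof -
    have "t mod k < length c" using k by (simp add: k_def)
    then have "c ! (t mod k) \<in> A" using cw_set[OF assms(1)] nth_mem by blast
    then show ?thesis using assms(4) by blast
  qed
  have "(\<Sum>t<(n div k)*k. wt (c ! (t mod k))) \<le> (\<Sum>t<n. wt (c ! (t mod k)))"
    by (rule sum_mono2) (use div_times_less_eq_dividend[of n k] in \<open>auto simp: nn\<close>)
  moreover have "(\<Sum>t<(n div k)*k. wt (c ! (t mod k))) = real (n div k) * (\<Sum>t<k. wt (c ! t))"
    by (rule sum_mod_period)
  moreover have "(\<Sum>t<k. wt (c ! t)) = real k * M"
    using assms(2) by (simp add: sum_list_sum_nth atLeast0LessThan k_def)
  moreover have "real n - real k \<le> real (n div k) * real k"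
  proof -
    have "n = (n div k) * k + n mod k" by simp
    moreover have "n mod k < k" using k by simp
    ultimately have "n \<le> (n div k) * k + k" by linarith
    then show ?thesis by (metis of_nat_add of_nat_le_iff of_nat_mult diff_le_eq)
  qed
  ultimately have "(real n - real k) * M \<le> (\<Sum>t<n. wt (c ! (t mod k)))"
    using assms(3) by (smt (verit) mult_right_mono mult.assoc)
  then show ?thesis by (simp add: k_def algebra_simps)
qed


lemma take1_hd: "xs \<noteq> [] \<Longrightarrow> take (Suc 0) xs = [hd xs]"
  by (cases xs) auto

lemma log_prod_lt:
  fixes f :: "nat \<Rightarrow> real"
  shows "(\<forall>t<n. 0 < f t) \<Longrightarrow> log b (\<Prod>t<n. f t) = (\<Sum>t<n. log b (f t))"
proof (induction n)
  case 0 then show ?case by simp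
next
  case (Suc n)
  have "0 < (\<Prod>t<n. f t)" using Suc.prems by (intro prod_pos) auto
  then show ?case using Suc by (simp add: log_mult_pos)
qed

locale qip =
  fixes F :: "'x \<Rightarrow> 'u \<Rightarrow> 'x set" and Q :: "'x set"
    and AA :: "'x set set" and G :: "'x set \<Rightarrow> 'u"
  assumes sys: "is_system F" and Qne: "Q \<noteq> {}"
    and qp: "quasi_invariant_partition F Q AA G"
begin

abbreviation "DD \<equiv> Dset F AA G"
abbreviation "wt \<equiv> weight F AA G"

lemma finA: "finite AA" and subQ: "\<And>A. A \<in> AA \<Longrightarrow> A \<subseteq> Q" and covQ: "Q \<subseteq> \<Union>AA"
  and FQ: "\<And>A. A \<in> AA \<Longrightarrow> Fset F A (G A) \<subseteq> Q"
  using qp by (auto simp: quasi_invariant_partition_def invariant_cover_def)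

lemma priv: "A \<in> AA \<Longrightarrow> A - \<Union>{B\<in>AA. B \<noteq> A} \<noteq> {}"
  using qp by (auto simp: quasi_invariant_partition_def)

lemma privD: "A \<in> AA \<Longrightarrow> B \<in> DD A \<Longrightarrow> Fset F A (G A) \<inter> (B - \<Union>{C\<in>DD A. C \<noteq> B}) \<noteq> {}"
  using qp unfolding quasi_invariant_partition_def by blast

lemma Dsub: "DD A \<subseteq> AA" by (auto simp: Dset_def)

lemma Fcov: "A \<in> AA \<Longrightarrow> Fset F A (G A) \<subseteq> \<Union>(DD A)"
  using FQ covQ by (fastforce simp: Dset_def)

lemma succ: "A \<in> AA \<Longrightarrow> \<exists>B\<in>AA. B \<in> DD A"
proof -
  assume A: "A \<in> AA"
  obtain x where x: "x \<in> A" using priv[OF A] by blast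
  obtain y where y: "y \<in> F x (G A)" using sys by (auto simp: is_system_def)
  have "y \<in> Fset F A (G A)" using x y by (auto simp: Fset_def)
  then show ?thesis using Fcov[OF A] Dsub by blast
qed

lemma Dfin: "finite (DD A)" using finA Dsub finite_subset by blast

lemma Dcard: "A \<in> AA \<Longrightarrow> 1 \<le> card (DD A)"
  using succ Dfin by (metis One_nat_def Suc_leI card_gt_0_iff empty_iff)

lemma wt_nonneg: "A \<in> AA \<Longrightarrow> 0 \<le> wt A"
proof -
  assume "A \<in> AA"
  then have "1 \<le> real (card (DD A))" using Dcard by simp
  then show ?thesis by (simp add: weight_def)
qed

lemma forceD:
  assumes "A \<in> AA" "P \<subseteq> AA" "Fset F A (G A) \<subseteq> \<Union>P"
  shows "DD A \<subseteq> P"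
proof
  fix B assume B: "B \<in> DD A"
  obtain x where x: "x \<in> Fset F A (G A)" "x \<in> B" "x \<notin> \<Union>{C\<in>DD A. C \<noteq> B}"
    using privD[OF assms(1) B] by blast
  obtain B' where B': "B' \<in> P" "x \<in> B'" using x(1) assms(3) by blast
  have "B' \<in> DD A" using B' x(1) assms(2) by (auto simp: Dset_def)
  then have "B' = B" using x(3) B' by blast
  then show "B \<in> P" using B' by simp
qed

lemma forceA:
  assumes "P \<subseteq> AA" "Q \<subseteq> \<Union>P"
  shows "AA \<subseteq> P"
proof
  fix A assume A: "A \<in> AA"
  obtain x where x: "x \<in> A" "x \<notin> \<Union>{B\<in>AA. B \<noteq> A}" using priv[OF A] by blast
  obtain B' where B': "B' \<in> P" "x \<in> B'" using x(1) subQ[OF A] assms(2) by blast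
  then have "B' = A" using x assms(1) by blast
  then show "A \<in> P" using B' by simp
qed

lemma snoc_nth: "c \<noteq> [] \<Longrightarrow> i < length c \<Longrightarrow> (c @ [hd c]) ! Suc i = c ! (Suc i mod length c)"
proof -
  assume c: "c \<noteq> []" and i: "i < length c"
  show ?thesis
  proof (cases "Suc i = length c")
    case True
    then show ?thesis using c by (simp add: nth_append hd_conv_nth)
  next
    case False
    then show ?thesis using i by (simp add: nth_append)
  qed
qed

lemma irr_iff: "irreducible_periodic F AA G c \<longleftrightarrow> cw AA DD c \<and> distinct c"
proof (cases "c = []")
  case True then show ?thesis by (simp add: irreducible_periodic_def cw_def)
next
  case False
  have eq: "adm AA DD (c @ [hd c]) \<longleftrightarrow> set c \<subseteq> AA \<and>
      (\<forall>i<length c. Fset F (c ! i) (G (c ! i)) \<inter> c ! ((i + 1) mod length c) \<noteq> {})"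
  proof -
    have "adm AA DD (c @ [hd c]) \<longleftrightarrow> set c \<subseteq> AA \<and>
      (\<forall>i<length c. c ! (Suc i mod length c) \<in> DD (c ! i))"
      unfolding adm_nth using False snoc_nth[OF False] by (auto simp: nth_append)
    also have "\<dots> \<longleftrightarrow> set c \<subseteq> AA \<and>
      (\<forall>i<length c. Fset F (c ! i) (G (c ! i)) \<inter> c ! ((i + 1) mod length c) \<noteq> {})"
    proof -
      have "i < length c \<Longrightarrow> set c \<subseteq> AA \<Longrightarrow> c ! (Suc i mod length c) \<in> AA" for i
        using False by (metis length_greater_0_conv mod_less_divisor nth_mem subsetD)
      then show ?thesis by (auto simp: Dset_def)
    qed
    finally show ?thesis .
  qed
  show ?thesis using False eq by (auto simp: irreducible_periodic_def cw_def)
qed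

lemma mmw: "max_mean_weight F AA G = Mw AA DD wt"
proof -
  have "{mean_weight F AA G c | c. irreducible_periodic F AA G c}
      = {sum_list (map wt c) / real (length c) | c. cw AA DD c \<and> distinct c}"
    by (simp add: irr_iff mean_weight_def sum_list_sum_nth atLeast0LessThan)
  then show ?thesis by (simp add: max_mean_weight_def Mw_def)
qed


definition "LL n = {al. length al = n \<and> set al \<subseteq> AA}"

lemma finLL: "finite (LL n)"
  unfolding LL_def using finite_lists_length_eq[OF finA] by (simp add: conj_commute)

lemma Pset_sub:
  assumes "S \<subseteq> LL n" "0 < n" "length p \<le> n"
  shows "Pset S n p \<subseteq> AA"
proof
  fix B assume B: "B \<in> Pset S n p"
  show "B \<in> AA"
  proof (cases "length p = n")
    case True
    then obtain be where be: "be \<in> S" "B = hd be" using B by (auto simp: Pset_def)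
    then have "be \<noteq> []" "set be \<subseteq> AA" using assms by (auto simp: LL_def)
    then show ?thesis using be by auto
  next
    case False
    then obtain be where be: "be \<in> S" "B = be ! length p" using B by (auto simp: Pset_def)
    then have "length p < length be" "set be \<subseteq> AA" using assms False by (auto simp: LL_def)
    then show ?thesis using be nth_mem by blast
  qed
qed

lemma span_LL: "spanning F Q AA G n S \<Longrightarrow> S \<subseteq> LL n"
  by (auto simp: spanning_def LL_def)

lemma reach:
  assumes sp: "spanning F Q AA G n S" and n: "0 < n"
  shows "adm AA DD p \<Longrightarrow> p \<noteq> [] \<Longrightarrow> length p \<le> n \<Longrightarrow> \<exists>be\<in>S. take (length p) be = p"
proof (induction p rule: rev_induct)
  case Nil then show ?case by simp
next
  case (snoc b p)
  show ?case
  proof (cases "p = []")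
    case True
    then have bA: "b \<in> AA" using snoc.prems by simp
    have "Pset S n (replicate n undefined) \<subseteq> AA"
      by (rule Pset_sub[OF span_LL[OF sp] n]) simp
    moreover have "Q \<subseteq> \<Union>(Pset S n (replicate n undefined))" using sp by (simp add: spanning_def)
    ultimately have "b \<in> Pset S n (replicate n undefined)" using forceA bA by blast
    then obtain be where be: "be \<in> S" "b = hd be" by (auto simp: Pset_def)
    then have "be \<noteq> []" using span_LL[OF sp] n by (auto simp: LL_def)
    then show ?thesis using be True take1_hd by fastforce
  next
    case False
    have admp: "adm AA DD p" and bD: "b \<in> DD (last p)"
      using snoc.prems(1) False by (auto simp: adm_append)
    have lp: "length p < n" using snoc.prems by simp
    obtain be where be: "be \<in> S" "take (length p) be = p" using snoc.IH admp False lp by auto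
    have lbe: "length be = n" using be span_LL[OF sp] by (auto simp: LL_def)
    define t where "t = length p - 1"
    have t1: "t + 1 = length p" using False by (simp add: t_def)
    have lastp: "last p = be ! t"
    proof -
      have "last p = p ! t" using False by (simp add: last_conv_nth t_def)
      also have "\<dots> = take (length p) be ! t" using be(2) by simp
      also have "\<dots> = be ! t" using t1 by (intro nth_take) simp
      finally show ?thesis .
    qed
    have "Fset F (be ! t) (G (be ! t)) \<subseteq> \<Union>(Pset S n (take (t + 1) be))"
    proof -
      have "\<forall>al\<in>S. \<forall>t. t + 1 < n \<longrightarrow> Fset F (al ! t) (G (al ! t)) \<subseteq> \<Union>(Pset S n (take (t + 1) al))"
        using sp unfolding spanning_def by blast
      moreover have "t + 1 < n" using t1 lp by simp
      ultimately show ?thesis using be(1) by blast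
    qed
    then have cov: "Fset F (be ! t) (G (be ! t)) \<subseteq> \<Union>(Pset S n p)" using t1 be(2) by simp
    have btA: "be ! t \<in> AA"
    proof -
      have "set be \<subseteq> AA" using be(1) span_LL[OF sp] by (auto simp: LL_def)
      moreover have "t < length be" using t1 lp lbe by simp
      ultimately show ?thesis using nth_mem by blast
    qed
    have "DD (be ! t) \<subseteq> Pset S n p"
      by (rule forceD[OF btA Pset_sub[OF span_LL[OF sp] n] cov]) (use lp in simp)
    then have "b \<in> Pset S n p" using bD lastp by auto
    then obtain be' where be': "be' \<in> S" "take (length p) be' = p" "b = be' ! length p"
      using lp by (auto simp: Pset_def)
    have "length be' = n" using be' span_LL[OF sp] by (auto simp: LL_def)
    then have "take (Suc (length p)) be' = p @ [b]"
      using be' lp by (simp add: take_Suc_conv_app_nth)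
    then show ?thesis using be' by auto
  qed
qed

lemma Nval_fin: "S \<subseteq> LL n \<Longrightarrow> finite {(\<Prod>t<n. card (Pset S n (take (t + 1) al))) | al. al \<in> S}"
proof -
  assume "S \<subseteq> LL n"
  then have "finite S" using finLL finite_subset by blast
  then show ?thesis by (simp add: Setcompr_eq_image)
qed

lemma lower:
  assumes sp: "spanning F Q AA G n S" and n: "0 < n" and al: "adm AA DD al" "length al = n"
  shows "(\<Prod>t<n. card (DD (al ! t))) \<le> Nval S n"
proof -
  obtain be where be: "be \<in> S" "take n be = al" using reach[OF sp n al(1)] al n by auto
  have "length be = n" using be span_LL[OF sp] by (auto simp: LL_def)
  then have alS: "al \<in> S" using be by simp
  have alA: "set al \<subseteq> AA" using al by (simp add: adm_nth)
  have "(\<Prod>t<n. card (DD (al ! t))) \<le> (\<Prod>t<n. card (Pset S n (take (t + 1) al)))"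
  proof (rule prod_mono, intro conjI)
    fix t assume t: "t \<in> {..<n}"
    have atA: "al ! t \<in> AA" using alA t al(2) by auto
    have PA: "Pset S n (take (t + 1) al) \<subseteq> AA"
      by (rule Pset_sub[OF span_LL[OF sp] n]) (use t al(2) in simp)
    have "DD (al ! t) \<subseteq> Pset S n (take (t + 1) al)"
    proof (cases "t + 1 < n")
      case True
      have "Fset F (al ! t) (G (al ! t)) \<subseteq> \<Union>(Pset S n (take (t + 1) al))"
        using sp alS True unfolding spanning_def by blast
      then show ?thesis by (rule forceD[OF atA PA])
    next
      case False
      then have "t + 1 = n" using t by simp
      then have "Pset S n (take (t + 1) al) = Pset S n (replicate n undefined)"
        using al(2) by (simp add: Pset_def)
      moreover have "Q \<subseteq> \<Union>(Pset S n (replicate n undefined))" using sp by (simp add: spanning_def)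
      ultimately have "AA \<subseteq> Pset S n (take (t + 1) al)" using forceA PA by metis
      then show ?thesis using Dsub by blast
    qed
    then show "card (DD (al ! t)) \<le> card (Pset S n (take (t + 1) al))"
      using PA finA by (meson card_mono finite_subset)
  qed simp
  also have "\<dots> \<le> Nval S n"
    unfolding Nval_def using alS by (intro Max_ge[OF Nval_fin[OF span_LL[OF sp]]]) auto
  finally show ?thesis .
qed

definition "SS n = {al. length al = n \<and> adm AA DD al}"

lemma SS_LL: "SS n \<subseteq> LL n" by (auto simp: SS_def LL_def adm_nth)

lemma ext_list: "A \<in> AA \<Longrightarrow> \<exists>q. length q = k \<and> adm AA DD (A # q)"
  using adm_ext[of AA DD "[A]" k] succ by auto

lemma SS_spanning:
  assumes n: "0 < n"
  shows "spanning F Q AA G n (SS n)"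
  unfolding spanning_def
proof (intro conjI ballI allI impI)
  show "SS n \<subseteq> {al. length al = n \<and> set al \<subseteq> AA}" using SS_LL by (simp add: LL_def)
  show "Q \<subseteq> \<Union>(Pset (SS n) n (replicate n undefined))"
  proof
    fix x assume "x \<in> Q"
    then obtain A where A: "A \<in> AA" "x \<in> A" using covQ by blast
    obtain q where q: "length q = n - 1" "adm AA DD (A # q)" using ext_list[OF A(1)] by blast
    have "A # q \<in> SS n" using q n by (simp add: SS_def)
    then have "A \<in> Pset (SS n) n (replicate n undefined)" by (force simp: Pset_def)
    then show "x \<in> \<Union>(Pset (SS n) n (replicate n undefined))" using A by blast
  qed
  fix al t assume al: "al \<in> SS n" and t: "t + 1 < n"
  have ad: "adm AA DD al" "length al = n" using al by (auto simp: SS_def)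
  have atA: "al ! t \<in> AA" using ad t by (auto simp: adm_nth)
  show "Fset F (al ! t) (G (al ! t)) \<subseteq> \<Union>(Pset (SS n) n (take (t + 1) al))"
  proof
    fix x assume "x \<in> Fset F (al ! t) (G (al ! t))"
    then obtain B where B: "B \<in> DD (al ! t)" "x \<in> B" using Fcov[OF atA] by blast
    have "adm AA DD (take (t + 1) al @ drop (t + 1) al)" using ad by simp
    then have ad1: "adm AA DD (take (t + 1) al)" by (simp only: adm_append)
    have lt: "last (take (t + 1) al) = al ! t" using t ad(2) by (simp add: take_Suc_conv_app_nth)
    have BA: "B \<in> AA" using B Dsub by blast
    have "adm AA DD (take (t + 1) al @ [B])" using ad1 B lt BA by (simp add: adm_append)
    then obtain q where q: "length q = n - (t + 2)" "adm AA DD ((take (t + 1) al @ [B]) @ q)"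
      using adm_ext[of AA DD "take (t + 1) al @ [B]" "n - (t + 2)"] succ by auto
    define be where "be = (take (t + 1) al @ [B]) @ q"
    have "length be = n" using q t ad(2) by (simp add: be_def)
    then have beS: "be \<in> SS n" using q by (simp add: SS_def be_def)
    have "take (t + 1) be = take (t + 1) al" using t ad(2) by (simp add: be_def)
    moreover have "be ! (t + 1) = B" using t ad(2) by (simp add: be_def nth_append)
    ultimately have "B \<in> Pset (SS n) n (take (t + 1) al)"
      using beS t ad(2) unfolding Pset_def by (auto intro!: exI[of _ be])
    then show "x \<in> \<Union>(Pset (SS n) n (take (t + 1) al))" using B by blast
  qed
qed

lemma upper_prod:
  assumes n: "0 < n" and al: "al \<in> SS n"
  shows "(\<Prod>t<n. card (Pset (SS n) n (take (t + 1) al))) \<le> card AA * (\<Prod>t<n. card (DD (al ! t)))"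
proof -
  obtain m where m: "n = Suc m" using n by (cases n) auto
  have ad: "adm AA DD al" "length al = n" using al by (auto simp: SS_def)
  have sub: "Pset (SS n) n (take (t + 1) al) \<subseteq> DD (al ! t)" if t: "t < m" for t
  proof
    fix B assume "B \<in> Pset (SS n) n (take (t + 1) al)"
    then obtain be where be: "be \<in> SS n" "take (t + 1) be = take (t + 1) al" "B = be ! (t + 1)"
      using t m ad(2) by (auto simp: Pset_def)
    have "be ! t = al ! t" using be(2) by (metis lessI nth_take Suc_eq_plus1)
    moreover have "be ! Suc t \<in> DD (be ! t)" using be(1) t m by (auto simp: SS_def adm_nth)
    ultimately show "B \<in> DD (al ! t)" using be(3) by simp
  qed
  define a where "a = (\<Prod>t<m. card (Pset (SS n) n (take (t + 1) al)))"
  define b where "b = (\<Prod>t<m. card (DD (al ! t)))"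
  define p where "p = card (Pset (SS n) n (take (m + 1) al))"
  define d where "d = card (DD (al ! m))"
  have ab: "a \<le> b" unfolding a_def b_def
    using sub Dfin by (intro prod_mono) (auto intro: card_mono)
  have pN: "p \<le> card AA" unfolding p_def
    using Pset_sub[OF SS_LL n, of "take (m + 1) al"] m finA by (auto intro: card_mono)
  have d1: "1 \<le> d" unfolding d_def using ad m by (intro Dcard) (auto simp: adm_nth)
  have "a * p \<le> b * card AA" using ab pN by (rule mult_le_mono)
  also have "\<dots> \<le> (b * d) * card AA" using d1 by simp
  finally have "a * p \<le> card AA * (b * d)" by (simp add: algebra_simps)
  then have "(\<Prod>t<m. card (Pset (SS n) n (take (t + 1) al))) * card (Pset (SS n) n (take (m + 1) al))
     \<le> card AA * ((\<Prod>t<m. card (DD (al ! t))) * card (DD (al ! m)))"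
    by (simp add: a_def b_def p_def d_def)
  then show ?thesis using m by (simp only: prod.lessThan_Suc)
qed

lemma log_prod_D:
  assumes "set al \<subseteq> AA" "length al = n"
  shows "log 2 (real (\<Prod>t<n. card (DD (al ! t)))) = sum_list (map wt al)"
proof -
  have "log 2 (real (\<Prod>t<n. card (DD (al ! t)))) = log 2 (\<Prod>t<n. real (card (DD (al ! t))))"
    by simp
  also have "\<dots> = (\<Sum>t<n. log 2 (real (card (DD (al ! t)))))"
  proof (rule log_prod_lt, intro allI impI)
    fix t assume "t < n"
    then have "al ! t \<in> AA" using assms by auto
    then show "0 < real (card (DD (al ! t)))" using Dcard by (simp add: Suc_le_eq)
  qed
  also have "\<dots> = sum_list (map wt al)"
    using assms(2) by (simp add: sum_list_sum_nth atLeast0LessThan weight_def)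
  finally show ?thesis .
qed


lemma main: "(\<lambda>n. log 2 (real (r_inv F Q AA G n)) / real n) \<longlonglongrightarrow> Mw AA DD wt"
proof -
  define M where "M = Mw AA DD wt"
  have AAne: "AA \<noteq> {}" using Qne covQ by blast
  have M0: "0 \<le> M" unfolding M_def using Mw_nonneg[of AA DD wt] finA AAne succ wt_nonneg by blast
  have M0': "0 \<le> Mw AA DD wt" using M0 by (simp add: M_def)
  obtain c1 where "cw AA DD c1" using cw_ex[of AA DD] finA AAne succ by blast
  then obtain c2 where "cw AA DD c2" "distinct c2" using cw_distinct_ex by blast
  then have ne: "{sum_list (map wt c) / real (length c) | c. cw AA DD c \<and> distinct c} \<noteq> {}" by blast
  have "M \<in> {sum_list (map wt c) / real (length c) | c. cw AA DD c \<and> distinct c}"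
    unfolding M_def Mw_def by (rule Max_in[OF fin_cyc[OF finA] ne])
  then obtain c0 where c0: "cw AA DD c0" "distinct c0" "M = sum_list (map wt c0) / real (length c0)" by blast
  define k where "k = length c0"
  have k0: "0 < k" using c0 by (auto simp: cw_def k_def)
  have sc0: "sum_list (map wt c0) = real (length c0) * M" using c0(3) k0 by (simp add: k_def)
  define W where "W = (\<Sum>a\<in>AA. wt a)"
  have wW: "wt a \<le> W" if "a \<in> AA" for a
    unfolding W_def using that finA wt_nonneg by (intro member_le_sum) auto
  have W0: "0 \<le> W" unfolding W_def using wt_nonneg by (intro sum_nonneg) auto
  define C where "C = log 2 (real (card AA)) + real (card AA) * W"
  have bounds: "M - real k * M / real n \<le> log 2 (real (r_inv F Q AA G n)) / real n \<and>
                log 2 (real (r_inv F Q AA G n)) / real n \<le> M + C / real n" if n: "0 < n" for n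
  proof -
    define R where "R = {Nval S n | S. spanning F Q AA G n S}"
    have "R \<subseteq> (\<lambda>S. Nval S n) ` Pow (LL n)" unfolding R_def using span_LL by blast
    then have finR: "finite R" using finLL finite_subset by blast
    have spS: "spanning F Q AA G n (SS n)" by (rule SS_spanning[OF n])
    then have SSR: "Nval (SS n) n \<in> R" unfolding R_def by blast
    then have neR: "R \<noteq> {}" by blast
    have rdef: "r_inv F Q AA G n = Min R" unfolding R_def r_inv_def by simp
    define al where "al = map (\<lambda>t. c0 ! (t mod k)) [0..<n]"
    have adal: "adm AA DD al" unfolding al_def k_def by (rule periodic_adm[OF c0(1)])
    have lal: "length al = n" by (simp add: al_def)
    have alA: "set al \<subseteq> AA" using adal by (simp add: adm_nth)
    define P where "P = (\<Prod>t<n. card (DD (al ! t)))"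
    have Ppos: "0 < P" unfolding P_def
    proof (rule prod_pos)
      fix t assume "t \<in> {..<n}"
      then have "al ! t \<in> AA" using alA lal by auto
      then show "0 < card (DD (al ! t))" using Dcard by (simp add: Suc_le_eq)
    qed
    have "Min R \<in> R" by (rule Min_in[OF finR neR])
    then obtain S where S: "spanning F Q AA G n S" "Min R = Nval S n" unfolding R_def by blast
    have PR: "P \<le> r_inv F Q AA G n" using lower[OF S(1) n adal lal] S(2) rdef by (simp add: P_def)
    have rpos: "0 < real (r_inv F Q AA G n)" using PR Ppos by linarith
    have "log 2 (real P) = sum_list (map wt al)" unfolding P_def by (rule log_prod_D[OF alA lal])
    also have "\<dots> = (\<Sum>t<n. wt (c0 ! (t mod k)))"
      by (simp add: al_def sum_set_upt_conv_sum_list_nat[symmetric] atLeast0LessThan o_def)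
    also have "\<dots> \<ge> real n * M - real k * M"
      using periodic_lower[OF c0(1) sc0 M0 wt_nonneg, of n] by (simp add: k_def)
    finally have low1: "real n * M - real k * M \<le> log 2 (real P)" .
    have "log 2 (real P) \<le> log 2 (real (r_inv F Q AA G n))"
      using PR Ppos by simp
    with low1 have low: "real n * M - real k * M \<le> log 2 (real (r_inv F Q AA G n))" by linarith
    have rle: "r_inv F Q AA G n \<le> Nval (SS n) n" unfolding rdef by (rule Min_le[OF finR SSR])
    obtain A where A: "A \<in> AA" using AAne by blast
    obtain q where q: "length q = n - 1" "adm AA DD (A # q)" using ext_list[OF A] by blast
    have "A # q \<in> SS n" using q n by (simp add: SS_def)
    then have neP: "{(\<Prod>t<n. card (Pset (SS n) n (take (t + 1) al))) | al. al \<in> SS n} \<noteq> {}" by blast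
    have "Nval (SS n) n \<in> {(\<Prod>t<n. card (Pset (SS n) n (take (t + 1) al))) | al. al \<in> SS n}"
      unfolding Nval_def by (rule Max_in[OF Nval_fin[OF SS_LL] neP])
    then obtain be where be: "be \<in> SS n" "Nval (SS n) n = (\<Prod>t<n. card (Pset (SS n) n (take (t + 1) be)))"
      by blast
    have adbe: "adm AA DD be" "length be = n" using be(1) by (auto simp: SS_def)
    have beA: "set be \<subseteq> AA" using adbe by (simp add: adm_nth)
    define Pb where "Pb = (\<Prod>t<n. card (DD (be ! t)))"
    have Pbpos: "0 < Pb" unfolding Pb_def
    proof (rule prod_pos)
      fix t assume "t \<in> {..<n}"
      then have "be ! t \<in> AA" using beA adbe by auto
      then show "0 < card (DD (be ! t))" using Dcard by (simp add: Suc_le_eq)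
    qed
    have cApos: "0 < card AA" using finA AAne by (simp add: card_gt_0_iff)
    have "r_inv F Q AA G n \<le> card AA * Pb"
      using rle be(2) upper_prod[OF n be(1)] by (simp add: Pb_def)
    then have "real (r_inv F Q AA G n) \<le> real (card AA) * real Pb"
      by (metis of_nat_le_iff of_nat_mult)
    then have "log 2 (real (r_inv F Q AA G n)) \<le> log 2 (real (card AA) * real Pb)"
      using rpos by simp
    also have "\<dots> = log 2 (real (card AA)) + log 2 (real Pb)"
      using cApos Pbpos by (simp add: log_mult_pos)
    also have "log 2 (real Pb) = sum_list (map wt be)" unfolding Pb_def by (rule log_prod_D[OF beA adbe(2)])
    also have "\<dots> \<le> real (length be) * M + real (card AA) * W"
      unfolding M_def by (rule path_bound[OF finA adbe(1) wW W0 M0'])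
    finally have up: "log 2 (real (r_inv F Q AA G n)) \<le> real n * M + C"
      using adbe(2) by (simp add: C_def)
    have nr: "0 < real n" using n by simp
    have "M - real k * M / real n = (real n * M - real k * M) / real n" using nr by (simp add: field_simps)
    also have "\<dots> \<le> log 2 (real (r_inv F Q AA G n)) / real n" using low nr by (simp add: divide_right_mono)
    finally have L: "M - real k * M / real n \<le> log 2 (real (r_inv F Q AA G n)) / real n" .
    have "log 2 (real (r_inv F Q AA G n)) / real n \<le> (real n * M + C) / real n"
      using up nr by (simp add: divide_right_mono)
    also have "\<dots> = M + C / real n" using nr by (simp add: field_simps)
    finally show ?thesis using L by simp
  qed
  have lim1: "(\<lambda>n. M - real k * M / real n) \<longlonglongrightarrow> M"
    using tendsto_diff[OF tendsto_const lim_const_over_n[of "real k * M"]] by simp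
  have lim2: "(\<lambda>n. M + C / real n) \<longlonglongrightarrow> M"
    using tendsto_add[OF tendsto_const lim_const_over_n[of C]] by simp
  have ev1: "eventually (\<lambda>n. M - real k * M / real n \<le> log 2 (real (r_inv F Q AA G n)) / real n) sequentially"
    by (rule eventually_sequentiallyI[of 1]) (use bounds in auto)
  have ev2: "eventually (\<lambda>n. log 2 (real (r_inv F Q AA G n)) / real n \<le> M + C / real n) sequentially"
    by (rule eventually_sequentiallyI[of 1]) (use bounds in auto)
  show ?thesis using tendsto_sandwich[OF ev1 ev2 lim1 lim2] by (simp add: M_def)
qed

end

theorem theorem3p2:
  fixes F :: "'x \<Rightarrow> 'u \<Rightarrow> 'x set" and Q :: "'x set"
    and \<A> :: "'x set set" and G :: "'x set \<Rightarrow> 'u"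
  assumes "is_system F"
    and "Q \<noteq> {}"
    and "controlled_invariant F Q"
    and "quasi_invariant_partition F Q \<A> G"
  shows "(\<lambda>n. log 2 (real (r_inv F Q \<A> G n)) / real n) \<longlonglongrightarrow> max_mean_weight F \<A> G"
proof -
  interpret qip F Q \<A> G using assms by (unfold_locales) auto
  show ?thesis using main mmw by simp
qed

end
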